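(* Let $A=\sum\{A_{ij}\mid i,j\in I\}$ be a generalized matrix ring having left and right gm non-zero divisors. Then $r_n(A)=\mathrm{g.m.}\,r_n(A)=\sum\{r_n(A_{ij})\mid i,j\in I\}$.
   Context: A generalized matrix (gm) ring: $I$ is a nonempty index set; for $i,j\in I$, $A_{ij}$ are additive groups with biadditive associative maps $A_{ij}\times A_{jl}\to A_{il}$. $A$ is the external direct sum of the $A_{ij}$ with $(xy)_{ij}=\sum_k x_{ik}y_{kj}$. A gm ideal is an ideal $B$ of $A$ with $B=\sum\{B_{ij}\}$, $B_{ij}\subseteq A_{ij}$. For a radical $r$, $\mathrm{g.m.}\,r(A)$ denotes the largest gm ideal of $A$ contained in $r(A)$. Each $A_{ij}$ is regarded as a $\Gamma$-ring with $\Gamma=A_{ji}$: an ideal is an additive subgroup $B\subseteq A_{ij}$ with $A_{ij}A_{ji}B\subseteq B$, $BA_{ji}A_{ij}\subseteq B$; $x\in A_{ij}$ is von Neumann regular if $x=xyx$ for some $y\in A_{ji}$; $r_n(A_{ij})$ is the largest ideal consisting of von Neumann regular elements. $r_n(A)$ is the largest ideal of the ring $A$ consisting of von Neumann regular elements. $A$ has left and right gm non-zero divisors means: for all $s,t\in I$ there is $0\neq d_{st}\in A_{st}$ with $xd_{st}\neq0$ and $d_{st}y\neq0$ for all $i,j\in I$ and all nonzero $x\in A_{is}$, $y\in A_{tj}$. *)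

theory Defs
  imports Main
begin

text \<open>Each group A_ij is
modelled as an additive subgroup C i j of a common abelian group 'a (every family of
abelian groups embeds in their direct sum, so no generality is lost). The maps
A_ij x A_jl -> A_il are m i j l.\<close>

definition gm_ring :: "('i \<Rightarrow> 'i \<Rightarrow> 'a::ab_group_add set) \<Rightarrow> ('i \<Rightarrow> 'i \<Rightarrow> 'i \<Rightarrow> 'a \<Rightarrow> 'a \<Rightarrow> 'a) \<Rightarrow> bool" where
  "gm_ring C m \<longleftrightarrow>
     (\<forall>i j. 0 \<in> C i j \<and> (\<forall>x\<in>C i j. \<forall>y\<in>C i j. x - y \<in> C i j)) \<and>
     (\<forall>i j l. \<forall>x\<in>C i j. \<forall>y\<in>C j l. m i j l x y \<in> C i l) \<and>
     (\<forall>i j l. \<forall>x\<in>C i j. \<forall>x'\<in>C i j. \<forall>y\<in>C j l. m i j l (x + x') y = m i j l x y + m i j l x' y) \<and>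
     (\<forall>i j l. \<forall>x\<in>C i j. \<forall>y\<in>C j l. \<forall>y'\<in>C j l. m i j l x (y + y') = m i j l x y + m i j l x y') \<and>
     (\<forall>i j k l. \<forall>x\<in>C i j. \<forall>y\<in>C j k. \<forall>z\<in>C k l.
        m i k l (m i j k x y) z = m i j l x (m j k l y z))"

definition gm_carrier :: "('i \<Rightarrow> 'i \<Rightarrow> 'a::ab_group_add set) \<Rightarrow> ('i \<Rightarrow> 'i \<Rightarrow> 'a) set" where
  "gm_carrier C = {x. finite {(i, j). x i j \<noteq> 0} \<and> (\<forall>i j. x i j \<in> C i j)}"

definition gm_mult :: "('i \<Rightarrow> 'i \<Rightarrow> 'i \<Rightarrow> 'a \<Rightarrow> 'a \<Rightarrow> 'a::ab_group_add)
    \<Rightarrow> ('i \<Rightarrow> 'i \<Rightarrow> 'a) \<Rightarrow> ('i \<Rightarrow> 'i \<Rightarrow> 'a) \<Rightarrow> ('i \<Rightarrow> 'i \<Rightarrow> 'a)" where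
  "gm_mult m x y = (\<lambda>i j. \<Sum>k\<in>{k. x i k \<noteq> 0}. m i k j (x i k) (y k j))"

definition gm_ideal_of :: "('i \<Rightarrow> 'i \<Rightarrow> 'a::ab_group_add set) \<Rightarrow> ('i \<Rightarrow> 'i \<Rightarrow> 'i \<Rightarrow> 'a \<Rightarrow> 'a \<Rightarrow> 'a)
    \<Rightarrow> ('i \<Rightarrow> 'i \<Rightarrow> 'a) set \<Rightarrow> bool" where
  "gm_ideal_of C m B \<longleftrightarrow> B \<subseteq> gm_carrier C \<and> (\<lambda>i j. 0) \<in> B \<and>
     (\<forall>x\<in>B. \<forall>y\<in>B. (\<lambda>i j. x i j - y i j) \<in> B) \<and>
     (\<forall>a\<in>gm_carrier C. \<forall>x\<in>B. gm_mult m a x \<in> B \<and> gm_mult m x a \<in> B)"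

definition gm_regular :: "('i \<Rightarrow> 'i \<Rightarrow> 'a::ab_group_add set) \<Rightarrow> ('i \<Rightarrow> 'i \<Rightarrow> 'i \<Rightarrow> 'a \<Rightarrow> 'a \<Rightarrow> 'a)
    \<Rightarrow> ('i \<Rightarrow> 'i \<Rightarrow> 'a) \<Rightarrow> bool" where
  "gm_regular C m x \<longleftrightarrow> (\<exists>y\<in>gm_carrier C. x = gm_mult m (gm_mult m x y) x)"

text \<open>r_n(A): the largest ideal of A consisting of von Neumann regular elements,
  realised as the union of all such ideals (which is that largest ideal).\<close>
definition rn_ring :: "('i \<Rightarrow> 'i \<Rightarrow> 'a::ab_group_add set) \<Rightarrow> ('i \<Rightarrow> 'i \<Rightarrow> 'i \<Rightarrow> 'a \<Rightarrow> 'a \<Rightarrow> 'a)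
    \<Rightarrow> ('i \<Rightarrow> 'i \<Rightarrow> 'a) set" where
  "rn_ring C m = \<Union>{B. gm_ideal_of C m B \<and> (\<forall>x\<in>B. gm_regular C m x)}"

definition gm_sum :: "('i \<Rightarrow> 'i \<Rightarrow> 'a::ab_group_add set) \<Rightarrow> ('i \<Rightarrow> 'i \<Rightarrow> 'a) set" where
  "gm_sum Bc = {x. finite {(i, j). x i j \<noteq> 0} \<and> (\<forall>i j. x i j \<in> Bc i j)}"

definition is_gm_ideal :: "('i \<Rightarrow> 'i \<Rightarrow> 'a::ab_group_add set) \<Rightarrow> ('i \<Rightarrow> 'i \<Rightarrow> 'i \<Rightarrow> 'a \<Rightarrow> 'a \<Rightarrow> 'a)
    \<Rightarrow> ('i \<Rightarrow> 'i \<Rightarrow> 'a) set \<Rightarrow> bool" where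
  "is_gm_ideal C m B \<longleftrightarrow> gm_ideal_of C m B \<and>
     (\<exists>Bc. (\<forall>i j. Bc i j \<subseteq> C i j) \<and> B = gm_sum Bc)"

text \<open>g.m. r(A) for a set X: the largest gm ideal contained in X (union of all gm ideals in X).\<close>
definition gm_part :: "('i \<Rightarrow> 'i \<Rightarrow> 'a::ab_group_add set) \<Rightarrow> ('i \<Rightarrow> 'i \<Rightarrow> 'i \<Rightarrow> 'a \<Rightarrow> 'a \<Rightarrow> 'a)
    \<Rightarrow> ('i \<Rightarrow> 'i \<Rightarrow> 'a) set \<Rightarrow> ('i \<Rightarrow> 'i \<Rightarrow> 'a) set" where
  "gm_part C m X = \<Union>{B. is_gm_ideal C m B \<and> B \<subseteq> X}"

text \<open>A_ij as a Gamma-ring with Gamma = A_ji.\<close>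
definition gamma_ideal :: "('i \<Rightarrow> 'i \<Rightarrow> 'a::ab_group_add set) \<Rightarrow> ('i \<Rightarrow> 'i \<Rightarrow> 'i \<Rightarrow> 'a \<Rightarrow> 'a \<Rightarrow> 'a)
    \<Rightarrow> 'i \<Rightarrow> 'i \<Rightarrow> 'a set \<Rightarrow> bool" where
  "gamma_ideal C m i j B \<longleftrightarrow> B \<subseteq> C i j \<and> 0 \<in> B \<and> (\<forall>x\<in>B. \<forall>y\<in>B. x - y \<in> B) \<and>
     (\<forall>a\<in>C i j. \<forall>g\<in>C j i. \<forall>b\<in>B.
        m i i j (m i j i a g) b \<in> B \<and> m i i j (m i j i b g) a \<in> B)"

definition gamma_regular :: "('i \<Rightarrow> 'i \<Rightarrow> 'a::ab_group_add set) \<Rightarrow> ('i \<Rightarrow> 'i \<Rightarrow> 'i \<Rightarrow> 'a \<Rightarrow> 'a \<Rightarrow> 'a)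
    \<Rightarrow> 'i \<Rightarrow> 'i \<Rightarrow> 'a \<Rightarrow> bool" where
  "gamma_regular C m i j x \<longleftrightarrow> (\<exists>y\<in>C j i. x = m i i j (m i j i x y) x)"

definition rn_gamma :: "('i \<Rightarrow> 'i \<Rightarrow> 'a::ab_group_add set) \<Rightarrow> ('i \<Rightarrow> 'i \<Rightarrow> 'i \<Rightarrow> 'a \<Rightarrow> 'a \<Rightarrow> 'a)
    \<Rightarrow> 'i \<Rightarrow> 'i \<Rightarrow> 'a set" where
  "rn_gamma C m i j = \<Union>{B. gamma_ideal C m i j B \<and> (\<forall>x\<in>B. gamma_regular C m i j x)}"

definition has_gm_nonzero_divisors :: "('i \<Rightarrow> 'i \<Rightarrow> 'a::ab_group_add set) \<Rightarrow> ('i \<Rightarrow> 'i \<Rightarrow> 'i \<Rightarrow> 'a \<Rightarrow> 'a \<Rightarrow> 'a) \<Rightarrow> bool" where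
  "has_gm_nonzero_divisors C m \<longleftrightarrow>
     (\<forall>s t. \<exists>d\<in>C s t. d \<noteq> 0 \<and>
        (\<forall>i. \<forall>x\<in>C i s. x \<noteq> 0 \<longrightarrow> m i s t x d \<noteq> 0) \<and>
        (\<forall>j. \<forall>y\<in>C t j. y \<noteq> 0 \<longrightarrow> m s t j d y \<noteq> 0))"

end

theory Submission
  imports Defs "HOL-Library.Function_Algebras"
begin


locale nur =
  fixes S :: "'b::ab_group_add set" and mul :: "'b \<Rightarrow> 'b \<Rightarrow> 'b"
  assumes zero_in: "0 \<in> S"
  and diff_in: "x \<in> S \<Longrightarrow> y \<in> S \<Longrightarrow> x - y \<in> S"
  and mul_in: "x \<in> S \<Longrightarrow> y \<in> S \<Longrightarrow> mul x y \<in> S"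
  and assoc: "x \<in> S \<Longrightarrow> y \<in> S \<Longrightarrow> z \<in> S \<Longrightarrow> mul (mul x y) z = mul x (mul y z)"
  and distl: "x \<in> S \<Longrightarrow> y \<in> S \<Longrightarrow> z \<in> S \<Longrightarrow> mul x (y + z) = mul x y + mul x z"
  and distr: "x \<in> S \<Longrightarrow> y \<in> S \<Longrightarrow> z \<in> S \<Longrightarrow> mul (x + y) z = mul x z + mul y z"
begin

lemma neg_in: "x \<in> S \<Longrightarrow> - x \<in> S"
  using diff_in[OF zero_in, of x] by simp

lemma add_in: "x \<in> S \<Longrightarrow> y \<in> S \<Longrightarrow> x + y \<in> S"
  using diff_in[of x "- y"] neg_in[of y] by simp

lemma mul0l: "x \<in> S \<Longrightarrow> mul 0 x = 0"
  using distr[OF zero_in zero_in, of x] by simp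

lemma mul0r: "x \<in> S \<Longrightarrow> mul x 0 = 0"
  using distl[OF _ zero_in zero_in, of x] by simp

lemma diffl: "x \<in> S \<Longrightarrow> y \<in> S \<Longrightarrow> z \<in> S \<Longrightarrow> mul x (y - z) = mul x y - mul x z"
  using distl[of x "y - z" z] diff_in[of y z] by (simp add: eq_diff_eq)

lemma diffr: "x \<in> S \<Longrightarrow> y \<in> S \<Longrightarrow> z \<in> S \<Longrightarrow> mul (x - y) z = mul x z - mul y z"
  using distr[of "x - y" y z] diff_in[of x y] by (simp add: eq_diff_eq)

definition reg where "reg x \<longleftrightarrow> (\<exists>y\<in>S. x = mul (mul x y) x)"

definition idl where "idl I \<longleftrightarrow> I \<subseteq> S \<and> 0 \<in> I \<and> (\<forall>x\<in>I. \<forall>y\<in>I. x - y \<in> I) \<and>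
   (\<forall>a\<in>S. \<forall>x\<in>I. mul a x \<in> I \<and> mul x a \<in> I)"

lemmas ex = distl distr diffl diffr assoc mul_in diff_in add_in

lemma BM:
  assumes x: "x \<in> S" and z: "z \<in> S" and r: "reg (x - mul (mul x z) x)"
  shows "reg x"
proof -
  obtain w where w: "w \<in> S" and hw: "x - mul (mul x z) x = mul (mul (x - mul (mul x z) x) w) (x - mul (mul x z) x)"
    using r unfolding reg_def by blast
  have h: "mul x (mul w x) - mul x (mul w (mul x (mul z x))) - mul x (mul z (mul x (mul w x)))
     + mul x (mul z (mul x (mul w (mul x (mul z x))))) = x - mul x (mul z x)"
    using hw x z w by (simp add: ex algebra_simps)
  define v where "v = z + w - mul z (mul x w) - mul w (mul x z) + mul z (mul x (mul w (mul x z)))"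
  have v: "v \<in> S" unfolding v_def using x z w by (simp add: ex)
  have "mul (mul x v) x = x"
    unfolding v_def using x z w h by (simp add: ex algebra_simps)
  then show ?thesis using v unfolding reg_def by metis
qed

lemma split1:
  assumes "x = p + q" "p \<in> S" "q \<in> S" "z \<in> S" "mul (mul p z) p = p" "mul z q = 0"
    and "reg (q - mul (mul q z) p)"
  shows "reg x"
proof -
  have e: "mul (mul x z) x = mul (mul p z) p + mul (mul p z) q + mul (mul q z) p + mul (mul q z) q"
    using assms(1-4) by (simp add: distl distr mul_in add_in)
  have "mul (mul p z) q = 0" "mul (mul q z) q = 0" using assms(2-6) by (simp_all add: assoc mul0r)
  then have "x - mul (mul x z) x = q - mul (mul q z) p"
    using e assms(1,5) by simp
  with assms(7) have "reg (x - mul (mul x z) x)" by simp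
  then show ?thesis using BM[of x z] assms(1-4) add_in by blast
qed

lemma split2:
  assumes "x = p + q" "p \<in> S" "q \<in> S" "z \<in> S" "mul (mul p z) p = p" "mul q z = 0"
    and "reg (q - mul (mul p z) q)"
  shows "reg x"
proof -
  have e: "mul (mul x z) x = mul (mul p z) p + mul (mul p z) q + mul (mul q z) p + mul (mul q z) q"
    using assms(1-4) by (simp add: distl distr mul_in add_in)
  have "mul (mul q z) p = 0" "mul (mul q z) q = 0" using assms(2-6) by (simp_all add: mul0l)
  then have "x - mul (mul x z) x = q - mul (mul p z) q"
    using e assms(1,5) by simp
  with assms(7) have "reg (x - mul (mul x z) x)" by simp
  then show ?thesis using BM[of x z] assms(1-4) add_in by blast
qed

lemma idl_sum:
  assumes I: "idl I" "\<forall>x\<in>I. reg x" and J: "idl J" "\<forall>x\<in>J. reg x"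
  shows "idl {a + b |a b. a \<in> I \<and> b \<in> J} \<and> (\<forall>x\<in>{a + b |a b. a \<in> I \<and> b \<in> J}. reg x)"
proof -
  have IS: "I \<subseteq> S" and JS: "J \<subseteq> S" using I J unfolding idl_def by auto
  show ?thesis
proof (intro conjI ballI)
  show "idl {a + b |a b. a \<in> I \<and> b \<in> J}"
    unfolding idl_def
  proof (intro conjI ballI)
    show "{a + b |a b. a \<in> I \<and> b \<in> J} \<subseteq> S" using IS JS add_in by blast
    have "(0::'b) = 0 + 0" by simp
    then show "0 \<in> {a + b |a b. a \<in> I \<and> b \<in> J}" using I J unfolding idl_def by blast
    fix x y assume "x \<in> {a + b |a b. a \<in> I \<and> b \<in> J}" "y \<in> {a + b |a b. a \<in> I \<and> b \<in> J}"
    then obtain a b a' b' where "x = a + b" "y = a' + b'" "a \<in> I" "b \<in> J" "a' \<in> I" "b' \<in> J" by blast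
    moreover have "x - y = (a - a') + (b - b')" using calculation by simp
    moreover have "a - a' \<in> I" "b - b' \<in> J" using calculation I J unfolding idl_def by blast+
    ultimately show "x - y \<in> {a + b |a b. a \<in> I \<and> b \<in> J}" by blast
  next
    fix c x assume c: "c \<in> S" and "x \<in> {a + b |a b. a \<in> I \<and> b \<in> J}"
    then obtain a b where ab: "x = a + b" "a \<in> I" "b \<in> J" by blast
    have "mul c x = mul c a + mul c b" "mul x c = mul a c + mul b c"
      using ab IS JS c distl[of c a b] distr[of a b c] by auto
    moreover have "mul c a \<in> I" "mul a c \<in> I" "mul c b \<in> J" "mul b c \<in> J"
      using ab I J c unfolding idl_def by blast+
    ultimately show "mul c x \<in> {a + b |a b. a \<in> I \<and> b \<in> J}" "mul x c \<in> {a + b |a b. a \<in> I \<and> b \<in> J}"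
      by blast+
  qed
next
  fix x assume "x \<in> {a + b |a b. a \<in> I \<and> b \<in> J}"
  then obtain a b where ab: "x = a + b" "a \<in> I" "b \<in> J" by blast
  have aS: "a \<in> S" and bS: "b \<in> S" using ab IS JS by auto
  obtain z where z: "z \<in> S" "a = mul (mul a z) a" using I ab unfolding reg_def by blast
  have e: "mul (mul x z) x = mul (mul a z) a + mul (mul a z) b + mul (mul b z) a + mul (mul b z) b"
    using ab aS bS z by (simp add: distl distr mul_in add_in)
  have "x - mul (mul x z) x = b - mul (mul a z) b - mul (mul b z) a - mul (mul b z) b"
    using e ab(1) z(2) by (simp add: algebra_simps)
  moreover have "\<dots> \<in> J"
  proof -
    have J1: "\<And>u v. u \<in> J \<Longrightarrow> v \<in> J \<Longrightarrow> u - v \<in> J" and J2: "\<And>c u. c \<in> S \<Longrightarrow> u \<in> J \<Longrightarrow> mul c u \<in> J \<and> mul u c \<in> J"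
      using J unfolding idl_def by auto
    have "mul (mul a z) b \<in> J" using J2 ab aS z mul_in by blast
    moreover have "mul (mul b z) a \<in> J" using J2[of z b] J2[of a] ab aS z by blast
    moreover have "mul (mul b z) b \<in> J" using J2[of z b] J2[of b] ab bS z by blast
    ultimately show ?thesis using J1 ab(3) by meson
  qed
  ultimately have "reg (x - mul (mul x z) x)" using J(2) by simp
  then show "reg x" using BM[of x z] ab aS bS z add_in by auto
qed
qed

end



definition supp :: "('i \<Rightarrow> 'i \<Rightarrow> 'a::zero) \<Rightarrow> ('i \<times> 'i) set" where "supp x = {(i, j). x i j \<noteq> 0}"


context
  fixes C :: "'i \<Rightarrow> 'i \<Rightarrow> 'a::ab_group_add set" and m :: "'i \<Rightarrow> 'i \<Rightarrow> 'i \<Rightarrow> 'a \<Rightarrow> 'a \<Rightarrow> 'a"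
  assumes R: "gm_ring C m"
begin

lemma C0[simp]: "0 \<in> C i j" using R unfolding gm_ring_def by simp
lemma Cdiff[simp]: "x \<in> C i j \<Longrightarrow> y \<in> C i j \<Longrightarrow> x - y \<in> C i j" using R unfolding gm_ring_def by simp
lemma Cneg[simp]: "x \<in> C i j \<Longrightarrow> - x \<in> C i j" using Cdiff[of 0 i j x] by simp
lemma Cadd[simp]: "x \<in> C i j \<Longrightarrow> y \<in> C i j \<Longrightarrow> x + y \<in> C i j" using Cdiff[of x i j "- y"] by simp
lemma Csum: "(\<And>k. k \<in> K \<Longrightarrow> f k \<in> C i j) \<Longrightarrow> sum f K \<in> C i j"
  by (induction K rule: infinite_finite_induct) auto
lemma mC[simp]: "x \<in> C i j \<Longrightarrow> y \<in> C j l \<Longrightarrow> m i j l x y \<in> C i l" using R unfolding gm_ring_def by simp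
lemma maddl: "x \<in> C i j \<Longrightarrow> x' \<in> C i j \<Longrightarrow> y \<in> C j l \<Longrightarrow> m i j l (x + x') y = m i j l x y + m i j l x' y"
  using R unfolding gm_ring_def by simp
lemma maddr: "x \<in> C i j \<Longrightarrow> y \<in> C j l \<Longrightarrow> y' \<in> C j l \<Longrightarrow> m i j l x (y + y') = m i j l x y + m i j l x y'"
  using R unfolding gm_ring_def by simp
lemma massoc: "x \<in> C i j \<Longrightarrow> y \<in> C j k \<Longrightarrow> z \<in> C k l \<Longrightarrow> m i k l (m i j k x y) z = m i j l x (m j k l y z)"
  using R unfolding gm_ring_def by simp
lemma m0l[simp]: "y \<in> C j l \<Longrightarrow> m i j l 0 y = 0" using maddl[of 0 i j 0 y l] by simp
lemma m0r[simp]: "x \<in> C i j \<Longrightarrow> m i j l x 0 = 0" using maddr[of x i j 0 l 0] by simp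
lemma mdiffl: "x \<in> C i j \<Longrightarrow> x' \<in> C i j \<Longrightarrow> y \<in> C j l \<Longrightarrow> m i j l (x - x') y = m i j l x y - m i j l x' y"
  using maddl[of "x - x'" i j x' y l] by (simp add: eq_diff_eq)
lemma mdiffr: "x \<in> C i j \<Longrightarrow> y \<in> C j l \<Longrightarrow> y' \<in> C j l \<Longrightarrow> m i j l x (y - y') = m i j l x y - m i j l x y'"
  using maddr[of x i j "y - y'" l y'] by (simp add: eq_diff_eq)
lemma msuml: "(\<And>k. k \<in> K \<Longrightarrow> f k \<in> C i j) \<Longrightarrow> y \<in> C j l \<Longrightarrow> m i j l (sum f K) y = (\<Sum>k\<in>K. m i j l (f k) y)"
  by (induction K rule: infinite_finite_induct) (auto simp: maddl Csum)
lemma msumr: "(\<And>k. k \<in> K \<Longrightarrow> f k \<in> C j l) \<Longrightarrow> x \<in> C i j \<Longrightarrow> m i j l x (sum f K) = (\<Sum>k\<in>K. m i j l x (f k))"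
  by (induction K rule: infinite_finite_induct) (auto simp: maddr Csum)


lemma carrierD: "x \<in> gm_carrier C \<Longrightarrow> finite (supp x)" "x \<in> gm_carrier C \<Longrightarrow> x i j \<in> C i j"
  unfolding gm_carrier_def supp_def by auto

lemma carrierI: "finite (supp x) \<Longrightarrow> (\<And>i j. x i j \<in> C i j) \<Longrightarrow> x \<in> gm_carrier C"
  unfolding gm_carrier_def supp_def by auto

lemma row_fin: "finite (supp x) \<Longrightarrow> finite {k. x i k \<noteq> 0}"
proof -
  assume "finite (supp x)"
  then have "finite (snd ` supp x)" by simp
  moreover have "{k. x i k \<noteq> 0} \<subseteq> snd ` supp x" unfolding supp_def
    by (auto intro: image_eqI[where x="(i, _)"])
  ultimately show ?thesis by (rule finite_subset[rotated])
qed

lemma gm_mult_eq: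
  assumes "finite K" "{k. x i k \<noteq> 0} \<subseteq> K" "\<And>k. k \<in> K \<Longrightarrow> y k j \<in> C k j"
  shows "gm_mult m x y i j = (\<Sum>k\<in>K. m i k j (x i k) (y k j))"
  unfolding gm_mult_def
proof (rule sum.mono_neutral_left[OF assms(1,2)], rule ballI)
  fix k assume "k \<in> K - {k. x i k \<noteq> 0}"
  then have "x i k = 0" "y k j \<in> C k j" using assms(3) by auto
  then show "m i k j (x i k) (y k j) = 0" by simp
qed

lemma gm_mult_nz:
  assumes "\<And>k. x i k \<in> C i k" "gm_mult m x y i j \<noteq> 0"
  shows "\<exists>k. x i k \<noteq> 0 \<and> y k j \<noteq> 0"
proof -
  have "\<exists>k\<in>{k. x i k \<noteq> 0}. m i k j (x i k) (y k j) \<noteq> 0"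
  proof (rule ccontr)
    assume "\<not> ?thesis"
    then have "gm_mult m x y i j = 0" unfolding gm_mult_def by (intro sum.neutral) blast
    then show False using assms(2) by simp
  qed
  then obtain k where "x i k \<noteq> 0" "m i k j (x i k) (y k j) \<noteq> 0" by blast
  moreover have "y k j \<noteq> 0"
  proof
    assume "y k j = 0"
    then show False using calculation(2) assms(1)[of k] by simp
  qed
  ultimately show ?thesis by blast
qed

lemma col_fin: "finite (supp x) \<Longrightarrow> finite (snd ` supp x)" by simp

lemma row_sub: "{k. x i k \<noteq> 0} \<subseteq> snd ` supp x"
  unfolding supp_def by (auto intro: image_eqI[where x="(i, _)"])

lemma carrier_zero: "0 \<in> gm_carrier C"
  by (rule carrierI) (auto simp: supp_def)

lemma carrier_diff: "x \<in> gm_carrier C \<Longrightarrow> y \<in> gm_carrier C \<Longrightarrow> x - y \<in> gm_carrier C"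
proof (rule carrierI)
  assume x: "x \<in> gm_carrier C" and y: "y \<in> gm_carrier C"
  have "supp (x - y) \<subseteq> supp x \<union> supp y" unfolding supp_def by auto
  then show "finite (supp (x - y))" using carrierD(1)[OF x] carrierD(1)[OF y] finite_subset by blast
  fix i j show "(x - y) i j \<in> C i j" using carrierD(2)[OF x] carrierD(2)[OF y] by simp
qed

lemma mult_entry: "x \<in> gm_carrier C \<Longrightarrow> y \<in> gm_carrier C \<Longrightarrow> gm_mult m x y i j \<in> C i j"
  unfolding gm_mult_def by (rule Csum) (simp add: carrierD(2))

lemma mult_carrier:
  assumes x: "x \<in> gm_carrier C" and y: "y \<in> gm_carrier C"
  shows "gm_mult m x y \<in> gm_carrier C"
proof (rule carrierI)
  have "supp (gm_mult m x y) \<subseteq> fst ` supp x \<times> snd ` supp y"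
  proof
    fix p assume "p \<in> supp (gm_mult m x y)"
    then obtain i j where p: "p = (i, j)" "gm_mult m x y i j \<noteq> 0" unfolding supp_def by auto
    then obtain k where "x i k \<noteq> 0" "y k j \<noteq> 0" using gm_mult_nz[of x i y j] carrierD(2)[OF x] by blast
    then have "(i, k) \<in> supp x" "(k, j) \<in> supp y" unfolding supp_def by auto
    then show "p \<in> fst ` supp x \<times> snd ` supp y" using p by force
  qed
  then show "finite (supp (gm_mult m x y))"
    using carrierD(1)[OF x] carrierD(1)[OF y] finite_subset by blast
  fix i j show "gm_mult m x y i j \<in> C i j" using mult_entry[OF x y] .
qed

lemma mult_assoc:
  assumes x: "x \<in> gm_carrier C" and y: "y \<in> gm_carrier C" and z: "z \<in> gm_carrier C"
  shows "gm_mult m (gm_mult m x y) z = gm_mult m x (gm_mult m y z)"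
proof (intro ext)
  fix i j
  define K where "K = snd ` supp x"
  define L where "L = snd ` supp y"
  have K: "finite K" "\<And>i. {k. x i k \<noteq> 0} \<subseteq> K" unfolding K_def using carrierD(1)[OF x] row_sub[of x] by auto
  have L: "finite L" "\<And>i. {k. y i k \<noteq> 0} \<subseteq> L" unfolding L_def using carrierD(1)[OF y] row_sub[of y] by auto
  have xyL: "{l. gm_mult m x y i l \<noteq> 0} \<subseteq> L"
  proof
    fix l assume "l \<in> {l. gm_mult m x y i l \<noteq> 0}"
    then obtain k where "y k l \<noteq> 0" using gm_mult_nz[of x i y l] carrierD(2)[OF x] by auto
    then show "l \<in> L" using L(2)[of k] by auto
  qed
  have "gm_mult m (gm_mult m x y) z i j = (\<Sum>l\<in>L. m i l j (gm_mult m x y i l) (z l j))"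
    by (rule gm_mult_eq[where x="gm_mult m x y" and i=i, OF L(1) xyL]) (simp add: carrierD(2)[OF z])
  also have "\<dots> = (\<Sum>l\<in>L. m i l j (\<Sum>k\<in>K. m i k l (x i k) (y k l)) (z l j))"
    by (rule sum.cong[OF refl], subst gm_mult_eq[OF K(1) K(2)]) (simp_all add: carrierD(2)[OF y])
  also have "\<dots> = (\<Sum>l\<in>L. \<Sum>k\<in>K. m i l j (m i k l (x i k) (y k l)) (z l j))"
    by (rule sum.cong[OF refl], rule msuml) (simp_all add: carrierD(2)[OF x] carrierD(2)[OF y] carrierD(2)[OF z])
  also have "\<dots> = (\<Sum>k\<in>K. \<Sum>l\<in>L. m i k j (x i k) (m k l j (y k l) (z l j)))"
    by (subst sum.swap, intro sum.cong refl massoc) (simp_all add: carrierD(2)[OF x] carrierD(2)[OF y] carrierD(2)[OF z])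
  also have "\<dots> = (\<Sum>k\<in>K. m i k j (x i k) (\<Sum>l\<in>L. m k l j (y k l) (z l j)))"
    by (rule sum.cong[OF refl], rule msumr[symmetric]) (simp_all add: carrierD(2)[OF x] carrierD(2)[OF y] carrierD(2)[OF z])
  also have "\<dots> = (\<Sum>k\<in>K. m i k j (x i k) (gm_mult m y z k j))"
    by (rule sum.cong[OF refl], subst gm_mult_eq[OF L(1) L(2)]) (simp_all add: carrierD(2)[OF z])
  also have "\<dots> = gm_mult m x (gm_mult m y z) i j"
    by (rule gm_mult_eq[OF K(1) K(2), symmetric]) (simp add: mult_entry y z)
  finally show "gm_mult m (gm_mult m x y) z i j = gm_mult m x (gm_mult m y z) i j" .
qed

lemma mult_distl:
  assumes x: "x \<in> gm_carrier C" and y: "y \<in> gm_carrier C" and z: "z \<in> gm_carrier C"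
  shows "gm_mult m x (y + z) = gm_mult m x y + gm_mult m x z"
proof (intro ext)
  fix i j
  show "gm_mult m x (y + z) i j = (gm_mult m x y + gm_mult m x z) i j"
    unfolding gm_mult_def plus_fun_apply
    by (subst sum.distrib[symmetric], rule sum.cong[OF refl], rule maddr)
      (simp_all add: carrierD(2)[OF x] carrierD(2)[OF y] carrierD(2)[OF z])
qed

lemma mult_distr:
  assumes x: "x \<in> gm_carrier C" and y: "y \<in> gm_carrier C" and z: "z \<in> gm_carrier C"
  shows "gm_mult m (x + y) z = gm_mult m x z + gm_mult m y z"
proof (intro ext)
  fix i j
  define K where "K = snd ` supp x \<union> snd ` supp y"
  have K: "finite K" "{k. x i k \<noteq> 0} \<subseteq> K" "{k. y i k \<noteq> 0} \<subseteq> K"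
    unfolding K_def using carrierD(1)[OF x] carrierD(1)[OF y] row_sub[of x i] row_sub[of y i] by auto
  have "{k. (x + y) i k \<noteq> 0} \<subseteq> {k. x i k \<noteq> 0} \<union> {k. y i k \<noteq> 0}" by auto
  then have K4: "{k. (x + y) i k \<noteq> 0} \<subseteq> K" using K by blast
  have zC: "\<And>k. k \<in> K \<Longrightarrow> z k j \<in> C k j" using carrierD(2)[OF z] by blast
  have e1: "gm_mult m x z i j = (\<Sum>k\<in>K. m i k j (x i k) (z k j))"
    by (rule gm_mult_eq[where x=x and i=i and y=z and j=j, OF K(1) K(2) zC])
  have e2: "gm_mult m y z i j = (\<Sum>k\<in>K. m i k j (y i k) (z k j))"
    by (rule gm_mult_eq[where x=y and i=i and y=z and j=j, OF K(1) K(3) zC])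
  have e3: "gm_mult m (x + y) z i j = (\<Sum>k\<in>K. m i k j ((x + y) i k) (z k j))"
    by (rule gm_mult_eq[where x="x + y" and i=i and y=z and j=j, OF K(1) K4 zC])
  have "(\<Sum>k\<in>K. m i k j ((x + y) i k) (z k j)) = (\<Sum>k\<in>K. m i k j (x i k) (z k j) + m i k j (y i k) (z k j))"
    by (rule sum.cong[OF refl]) (simp add: maddl carrierD(2)[OF x] carrierD(2)[OF y] carrierD(2)[OF z])
  then show "gm_mult m (x + y) z i j = (gm_mult m x z + gm_mult m y z) i j"
    using e1 e2 e3 by (simp add: sum.distrib)
qed

lemma nur_gm: "nur (gm_carrier C) (gm_mult m)"
  by unfold_locales (simp_all add: carrier_zero carrier_diff mult_carrier mult_assoc mult_distl mult_distr)

end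



definition sg :: "'i \<Rightarrow> 'i \<Rightarrow> 'a \<Rightarrow> ('i \<Rightarrow> 'i \<Rightarrow> 'a::zero)" where
  "sg s t a = (\<lambda>i j. if i = s \<and> j = t then a else 0)"

context
  fixes C :: "'i \<Rightarrow> 'i \<Rightarrow> 'a::ab_group_add set" and m :: "'i \<Rightarrow> 'i \<Rightarrow> 'i \<Rightarrow> 'a \<Rightarrow> 'a \<Rightarrow> 'a"
  assumes R: "gm_ring C m"
begin

lemmas RC[simp] = C0[OF R] Cdiff[OF R] Cneg[OF R] Cadd[OF R] mC[OF R] m0l[OF R] m0r[OF R]

lemma sg_carrier: assumes "a \<in> C s t" shows "sg s t a \<in> gm_carrier C"
proof (rule carrierI[OF R])
  have "supp (sg s t a) \<subseteq> {(s, t)}" unfolding supp_def sg_def by auto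
  then show "finite (supp (sg s t a))" using finite_subset by blast
  fix i j show "sg s t a i j \<in> C i j" using \<open>a \<in> C s t\<close> by (auto simp: sg_def)
qed

lemma sum_single:
  assumes "finite K" "s \<in> K" "\<And>k. k \<in> K \<Longrightarrow> k \<noteq> s \<Longrightarrow> f k = 0"
  shows "sum f K = f s"
proof -
  have "sum f K = (\<Sum>k\<in>K. if k = s then f s else 0)"
    by (rule sum.cong[OF refl]) (use assms(3) in auto)
  then show ?thesis using assms(1,2) by simp
qed

lemma mult_rowright:
  assumes x: "x \<in> gm_carrier C" and r: "r \<in> gm_carrier C" and rs: "\<And>k j. k \<noteq> s \<Longrightarrow> r k j = 0"
  shows "gm_mult m x r i j = m i s j (x i s) (r s j)"
proof -
  define K where "K = insert s (snd ` supp x)"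
  have K: "finite K" "{k. x i k \<noteq> 0} \<subseteq> K" "s \<in> K"
    unfolding K_def using carrierD(1)[OF R x] row_sub[OF R, of x i] by auto
  have "gm_mult m x r i j = (\<Sum>k\<in>K. m i k j (x i k) (r k j))"
    by (rule gm_mult_eq[OF R, where x=x and i=i, OF K(1,2)]) (simp add: carrierD(2)[OF R r])
  also have "\<dots> = m i s j (x i s) (r s j)"
    by (rule sum_single[OF K(1,3)]) (simp add: rs carrierD(2)[OF R x])
  finally show ?thesis .
qed

lemma mult_rowleft:
  assumes x: "x \<in> gm_carrier C" and r: "r \<in> gm_carrier C" and rs: "\<And>k. k \<noteq> s \<Longrightarrow> x i k = 0"
  shows "gm_mult m x r i j = m i s j (x i s) (r s j)"
proof -
  have K: "finite {s}" "{k. x i k \<noteq> 0} \<subseteq> {s}" using rs by auto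
  show ?thesis
    using gm_mult_eq[OF R, where x=x and i=i and y=r and j=j, OF K] carrierD(2)[OF R r] by simp
qed

lemma sg_mult_left:
  assumes "a \<in> C s t" "x \<in> gm_carrier C"
  shows "gm_mult m (sg s t a) x = (\<lambda>i j. if i = s then m s t j a (x t j) else 0)"
proof (intro ext)
  fix i j
  have "gm_mult m (sg s t a) x i j = m i t j (sg s t a i t) (x t j)"
    by (rule mult_rowleft) (auto simp: sg_carrier[unfolded sg_def] assms sg_def)
  then show "gm_mult m (sg s t a) x i j = (if i = s then m s t j a (x t j) else 0)"
    using carrierD(2)[OF R assms(2)] by (simp add: sg_def)
qed

lemma sg_mult_right:
  assumes "a \<in> C s t" "x \<in> gm_carrier C"
  shows "gm_mult m x (sg s t a) = (\<lambda>i j. if j = t then m i s t (x i s) a else 0)"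
proof (intro ext)
  fix i j
  have "gm_mult m x (sg s t a) i j = m i s j (x i s) (sg s t a s j)"
    by (rule mult_rowright) (auto simp: sg_carrier[unfolded sg_def] assms sg_def)
  then show "gm_mult m x (sg s t a) i j = (if j = t then m i s t (x i s) a else 0)"
    using carrierD(2)[OF R assms(2)] by (simp add: sg_def)
qed

lemma lcancel:
  assumes d: "d \<in> C k s" and dl: "\<forall>j. \<forall>y\<in>C s j. y \<noteq> 0 \<longrightarrow> m k s j d y \<noteq> 0"
    and a: "a \<in> C s j" and b: "b \<in> C s j" and e: "m k s j d a = m k s j d b"
  shows "a = b"
proof (rule ccontr)
  assume "a \<noteq> b"
  then have "m k s j d (a - b) \<noteq> 0" using dl a b by simp
  then show False using e mdiffr[OF R d a b] by simp
qed

lemma rcancel: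
  assumes d: "d \<in> C t j" and dr: "\<forall>i. \<forall>x\<in>C i t. x \<noteq> 0 \<longrightarrow> m i t j x d \<noteq> 0"
    and a: "a \<in> C i t" and b: "b \<in> C i t" and e: "m i t j a d = m i t j b d"
  shows "a = b"
proof (rule ccontr)
  assume "a \<noteq> b"
  then have "m i t j (a - b) d \<noteq> 0" using dr a b by simp
  then show False using e mdiffl[OF R a b d] by simp
qed

lemma gamma_reg_cancel:
  assumes d: "d \<in> C k s" and dl: "\<forall>j. \<forall>y\<in>C s j. y \<noteq> 0 \<longrightarrow> m k s j d y \<noteq> 0"
    and d': "d' \<in> C t j" and dr: "\<forall>i. \<forall>x\<in>C i t. x \<noteq> 0 \<longrightarrow> m i t j x d' \<noteq> 0"
    and y: "y \<in> C s t" and g: "g \<in> C j k"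
    and cc: "m k t j (m k s t d y) d' = m k k j (m k j k (m k t j (m k s t d y) d') g) (m k t j (m k s t d y) d')"
  shows "gamma_regular C m s t y"
proof -
  note A = massoc[OF R]
  define h where "h = m t j s d' (m j k s g d)"
  have h: "h \<in> C t s" unfolding h_def using d d' g by simp
  have e1: "m k s j d (m s t j y d') = m k s j d (m s t j y (m t j j d' (m j k j g (m k s j d (m s t j y d')))))"
    using cc d d' g y by (simp add: A)
  have e2: "m s t j y d' = m s t j y (m t j j d' (m j k j g (m k s j d (m s t j y d'))))"
    by (rule lcancel[OF d dl _ _ e1]) (use d d' g y in simp_all)
  have e3: "m s t j y (m t j j d' (m j k j g (m k s j d (m s t j y d')))) = m s t j (m s s t (m s t s y h) y) d'"
    unfolding h_def using d d' g y by (simp add: A)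
  have "y = m s s t (m s t s y h) y"
    by (rule rcancel[OF d' dr _ _ ]) (use e2 e3 d d' g y h in simp_all)
  then show ?thesis unfolding gamma_regular_def using h by blast
qed

end



context
  fixes C :: "'i \<Rightarrow> 'i \<Rightarrow> 'a::ab_group_add set" and m :: "'i \<Rightarrow> 'i \<Rightarrow> 'i \<Rightarrow> 'a \<Rightarrow> 'a \<Rightarrow> 'a"
  assumes R: "gm_ring C m"
begin

lemmas RC'[simp] = C0[OF R] Cdiff[OF R] Cneg[OF R] Cadd[OF R] mC[OF R] m0l[OF R] m0r[OF R]

interpretation N: nur "gm_carrier C" "gm_mult m" by (rule nur_gm[OF R])

lemma reg_eq: "gm_regular C m x = N.reg x"
  unfolding gm_regular_def N.reg_def ..

lemma idl_eq: "gm_ideal_of C m B = N.idl B"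
proof -
  have "\<And>x y :: 'i \<Rightarrow> 'i \<Rightarrow> 'a. (\<lambda>i j. x i j - y i j) = x - y" by (simp add: fun_eq_iff)
  moreover have "(\<lambda>i j. 0) = (0 :: 'i \<Rightarrow> 'i \<Rightarrow> 'a)" by (simp add: fun_eq_iff)
  ultimately show ?thesis unfolding gm_ideal_of_def N.idl_def by simp
qed

lemma sg_sg:
  assumes "a \<in> C s t" "b \<in> C t u"
  shows "gm_mult m (sg s t a) (sg t u b) = sg s u (m s t u a b)"
  using assms by (simp add: sg_mult_left[OF R] sg_carrier[OF R]) (auto simp: sg_def fun_eq_iff)

lemma comp_in_rn_gamma:
  assumes I: "gm_ideal_of C m B" and rg: "\<forall>x\<in>B. gm_regular C m x"
    and ND: "has_gm_nonzero_divisors C m" and yB: "y \<in> B"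
  shows "y i j \<in> rn_gamma C m i j"
proof -
  have BS: "B \<subseteq> gm_carrier C" and B0: "(\<lambda>i j. 0) \<in> B"
    and Bd: "\<And>x y. x \<in> B \<Longrightarrow> y \<in> B \<Longrightarrow> (\<lambda>i j. x i j - y i j) \<in> B"
    and Bm: "\<And>a x. a \<in> gm_carrier C \<Longrightarrow> x \<in> B \<Longrightarrow> gm_mult m a x \<in> B \<and> gm_mult m x a \<in> B"
    using I unfolding gm_ideal_of_def by auto
  define Bij where "Bij = (\<lambda>y. y i j) ` B"
  have "gamma_ideal C m i j Bij"
    unfolding gamma_ideal_def
  proof (intro conjI ballI)
    show "Bij \<subseteq> C i j" unfolding Bij_def using BS carrierD(2)[OF R] by blast
    show "0 \<in> Bij" unfolding Bij_def using B0 by (auto intro: image_eqI[where x="\<lambda>i j. 0"])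
    fix u v assume "u \<in> Bij" "v \<in> Bij"
    then obtain x x' where "x \<in> B" "x' \<in> B" "u = x i j" "v = x' i j" unfolding Bij_def by blast
    then show "u - v \<in> Bij" unfolding Bij_def using Bd by (auto intro: image_eqI[where x="\<lambda>i j. x i j - x' i j"])
  next
    fix a g b assume a: "a \<in> C i j" and g: "g \<in> C j i" and "b \<in> Bij"
    then obtain x where x: "x \<in> B" "b = x i j" unfolding Bij_def by blast
    have xc: "x \<in> gm_carrier C" using x BS by blast
    have "gm_mult m (sg i i (m i j i a g)) x \<in> B" using Bm x sg_carrier[OF R] a g by simp
    moreover have "gm_mult m (sg i i (m i j i a g)) x i j = m i i j (m i j i a g) b"
      using x xc a g by (simp add: sg_mult_left[OF R])
    ultimately show "m i i j (m i j i a g) b \<in> Bij" unfolding Bij_def by (metis image_eqI)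
    have "gm_mult m x (sg j j (m j i j g a)) \<in> B" using Bm x sg_carrier[OF R] a g by simp
    moreover have "gm_mult m x (sg j j (m j i j g a)) i j = m i i j (m i j i b g) a"
      using x xc a g carrierD(2)[OF R xc] by (simp add: sg_mult_right[OF R] massoc[OF R])
    ultimately show "m i i j (m i j i b g) a \<in> Bij" unfolding Bij_def by (metis image_eqI)
  qed
  moreover have "\<forall>b\<in>Bij. gamma_regular C m i j b"
  proof
    fix b assume "b \<in> Bij"
    then obtain x where x: "x \<in> B" "b = x i j" unfolding Bij_def by blast
    have xc: "x \<in> gm_carrier C" using x BS by blast
    have b: "b \<in> C i j" using x carrierD(2)[OF R xc] by simp
    obtain d where d: "d \<in> C i i" "\<forall>j. \<forall>y\<in>C i j. y \<noteq> 0 \<longrightarrow> m i i j d y \<noteq> 0"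
      using ND unfolding has_gm_nonzero_divisors_def by blast
    obtain d' where d': "d' \<in> C j j" "\<forall>i. \<forall>x\<in>C i j. x \<noteq> 0 \<longrightarrow> m i j j x d' \<noteq> 0"
      using ND unfolding has_gm_nonzero_divisors_def by blast
    define c where "c = m i j j (m i i j d b) d'"
    have c: "c \<in> C i j" unfolding c_def using d d' b by simp
    define w where "w = gm_mult m (gm_mult m (sg i i d) x) (sg j j d')"
    have wB: "w \<in> B" unfolding w_def using Bm x sg_carrier[OF R] d d' xc by (meson N.mul_in)
    have w1: "gm_mult m (sg i i d) x = (\<lambda>a b'. if a = i then m i i b' d (x i b') else 0)"
      by (rule sg_mult_left[OF R d(1) xc])
    have V: "gm_mult m (sg i i d) x \<in> gm_carrier C" using sg_carrier[OF R d(1)] xc by (rule N.mul_in)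
    have w: "w = sg i j c"
      unfolding w_def sg_mult_right[OF R d'(1) V] unfolding w1 c_def x(2) using d d' carrierD(2)[OF R xc]
      by (auto simp: sg_def fun_eq_iff)
    obtain z where z: "z \<in> gm_carrier C" "w = gm_mult m (gm_mult m w z) w"
      using rg wB unfolding gm_regular_def by blast
    have zji: "z j i \<in> C j i" using carrierD(2)[OF R z(1)] .
    have U: "gm_mult m (sg i j c) z \<in> gm_carrier C" using sg_carrier[OF R c] z(1) by (rule N.mul_in)
    have "gm_mult m (gm_mult m w z) w i j = m i i j (m i j i c (z j i)) c"
      unfolding w sg_mult_right[OF R c U] unfolding sg_mult_left[OF R c z(1)] by simp
    then have "c = m i i j (m i j i c (z j i)) c" using z(2) w by (metis sg_def)
    then show "gamma_regular C m i j b"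
      using gamma_reg_cancel[OF R d(1) d(2) d'(1) d'(2) b zji] unfolding c_def by blast
  qed
  ultimately show ?thesis unfolding rn_gamma_def Bij_def using yB by blast
qed

end



context
  fixes C :: "'i \<Rightarrow> 'i \<Rightarrow> 'a::ab_group_add set" and m :: "'i \<Rightarrow> 'i \<Rightarrow> 'i \<Rightarrow> 'a \<Rightarrow> 'a \<Rightarrow> 'a"
  assumes R: "gm_ring C m"
begin

lemmas RC''[simp] = C0[OF R] Cdiff[OF R] Cneg[OF R] Cadd[OF R] mC[OF R] m0l[OF R] m0r[OF R]

interpretation N: nur "gm_carrier C" "gm_mult m" by (rule nur_gm[OF R])

lemma gm_sum_ideal:
  assumes QC: "\<And>s t. Q s t \<subseteq> C s t" and Q0: "\<And>s t. 0 \<in> Q s t"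
    and Qd: "\<And>s t x y. x \<in> Q s t \<Longrightarrow> y \<in> Q s t \<Longrightarrow> x - y \<in> Q s t"
    and Ql: "\<And>r s t a y. a \<in> C r s \<Longrightarrow> y \<in> Q s t \<Longrightarrow> m r s t a y \<in> Q r t"
    and Qr: "\<And>r s t a y. y \<in> Q r s \<Longrightarrow> a \<in> C s t \<Longrightarrow> m r s t y a \<in> Q r t"
  shows "gm_ideal_of C m (gm_sum Q)"
proof -
  have Qa: "\<And>s t x y. x \<in> Q s t \<Longrightarrow> y \<in> Q s t \<Longrightarrow> x + y \<in> Q s t"
    using Qd Q0 by (metis diff_0 diff_minus_eq_add)
  have Qs: "\<And>s t f K. (\<And>k. k \<in> K \<Longrightarrow> f k \<in> Q s t) \<Longrightarrow> sum f K \<in> Q s t"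
  proof -
    fix s t f and K :: "'c set"
    show "(\<And>k. k \<in> K \<Longrightarrow> f k \<in> Q s t) \<Longrightarrow> sum f K \<in> Q s t"
      by (induction K rule: infinite_finite_induct) (auto simp: Q0 Qa)
  qed
  have sub: "gm_sum Q \<subseteq> gm_carrier C" unfolding gm_sum_def gm_carrier_def using QC by blast
  have fin: "\<And>x. x \<in> gm_sum Q \<Longrightarrow> finite (supp x)" unfolding gm_sum_def supp_def by blast
  have ent: "\<And>x i j. x \<in> gm_sum Q \<Longrightarrow> x i j \<in> Q i j" unfolding gm_sum_def by blast
  have mk: "\<And>x. finite (supp x) \<Longrightarrow> (\<And>i j. x i j \<in> Q i j) \<Longrightarrow> x \<in> gm_sum Q"
    unfolding gm_sum_def supp_def by blast
  show ?thesis unfolding gm_ideal_of_def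
  proof (intro conjI ballI)
    show "gm_sum Q \<subseteq> gm_carrier C" by (rule sub)
    show "(\<lambda>i j. 0) \<in> gm_sum Q" by (rule mk) (auto simp: supp_def Q0)
    fix x y assume x: "x \<in> gm_sum Q" and y: "y \<in> gm_sum Q"
    have "(\<lambda>i j. x i j - y i j) = x - y" by (simp add: fun_eq_iff)
    moreover have "x - y \<in> gm_carrier C" using x y sub N.diff_in by blast
    ultimately show "(\<lambda>i j. x i j - y i j) \<in> gm_sum Q"
      using carrierD(1)[OF R] ent x y Qd by (intro mk) auto
  next
    fix a x assume a: "a \<in> gm_carrier C" and x: "x \<in> gm_sum Q"
    have xc: "x \<in> gm_carrier C" using x sub by blast
    show "gm_mult m a x \<in> gm_sum Q"
    proof (rule mk)
      show "finite (supp (gm_mult m a x))" using carrierD(1)[OF R N.mul_in[OF a xc]] .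
      fix i j show "gm_mult m a x i j \<in> Q i j"
        unfolding gm_mult_def by (rule Qs, rule Ql) (auto simp: carrierD(2)[OF R a] ent[OF x])
    qed
    show "gm_mult m x a \<in> gm_sum Q"
    proof (rule mk)
      show "finite (supp (gm_mult m x a))" using carrierD(1)[OF R N.mul_in[OF xc a]] .
      fix i j show "gm_mult m x a i j \<in> Q i j"
        unfolding gm_mult_def by (rule Qs, rule Qr) (auto simp: carrierD(2)[OF R a] ent[OF x])
    qed
  qed
qed

lemma gm_sum_regular:
  assumes QC: "\<And>s t. Q s t \<subseteq> C s t" and I: "gm_ideal_of C m (gm_sum Q)"
    and QR: "\<And>s t y. y \<in> Q s t \<Longrightarrow> gamma_regular C m s t y"
    and xJ: "x \<in> gm_sum Q"
  shows "gm_regular C m x"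
proof -
  define J where "J = gm_sum Q"
  have IJ: "N.idl J" using I idl_eq[OF R] unfolding J_def by simp
  have Jsub: "\<And>x. x \<in> J \<Longrightarrow> x \<in> gm_carrier C" and J0: "0 \<in> J"
    and Jd: "\<And>x y. x \<in> J \<Longrightarrow> y \<in> J \<Longrightarrow> x - y \<in> J"
    and Jm: "\<And>a x. a \<in> gm_carrier C \<Longrightarrow> x \<in> J \<Longrightarrow> gm_mult m a x \<in> J"
    using IJ unfolding N.idl_def by blast+
  have ent: "\<And>x i j. x \<in> J \<Longrightarrow> x i j \<in> Q i j" unfolding J_def gm_sum_def by blast
  have mk: "\<And>x. finite (supp x) \<Longrightarrow> (\<And>i j. x i j \<in> Q i j) \<Longrightarrow> x \<in> J"
    unfolding J_def gm_sum_def supp_def by blast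
  have Q0: "\<And>i j. 0 \<in> Q i j" using ent[OF J0] by simp
  have reg0: "N.reg 0" unfolding N.reg_def using N.zero_in N.mul0l[OF N.zero_in] by metis
  have z0: "\<And>x. supp x = {} \<Longrightarrow> x = 0" by (auto simp: supp_def fun_eq_iff)
  have inner: "\<forall>x. x \<in> J \<longrightarrow> (\<forall>i j. x i j \<noteq> 0 \<longrightarrow> i = s) \<longrightarrow> card (snd ` supp x) = n \<longrightarrow> N.reg x" for n s
  proof (induction n rule: less_induct)
    case (less n)
    show ?case
    proof (intro allI impI)
      fix x assume x: "x \<in> J" and row: "\<forall>i j. x i j \<noteq> 0 \<longrightarrow> i = s" and cn: "card (snd ` supp x) = n"
      have xc: "x \<in> gm_carrier C" using Jsub x .
      show "N.reg x"
      proof (cases "supp x = {}")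
        case True then have "x = 0" by (rule z0)
        then show ?thesis using reg0 by simp
      next
        case False
        then obtain s' t where "x s' t \<noteq> 0" unfolding supp_def by auto
        then have st: "x s t \<noteq> 0" using row by auto
        define y where "y = x s t"
        have yQ: "y \<in> Q s t" unfolding y_def using ent[OF x] .
        have yC: "y \<in> C s t" using yQ QC by blast
        obtain w where wC: "w \<in> C t s" and yw: "y = m s s t (m s t s y w) y"
          using QR[OF yQ] unfolding gamma_regular_def by blast
        define p where "p = sg s t y"
        define q where "q = x - p"
        define z where "z = sg t s w"
        have pc: "p \<in> gm_carrier C" unfolding p_def by (rule sg_carrier[OF R yC])
        have zc: "z \<in> gm_carrier C" unfolding z_def by (rule sg_carrier[OF R wC])
        have pJ: "p \<in> J"
        proof (rule mk)
          show "finite (supp p)" using carrierD(1)[OF R pc] .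
          fix i j show "p i j \<in> Q i j" unfolding p_def sg_def using yQ Q0 by auto
        qed
        have qJ: "q \<in> J" unfolding q_def using Jd[OF x pJ] .
        have qc: "q \<in> gm_carrier C" using Jsub[OF qJ] .
        have xpq: "x = p + q" unfolding q_def by simp
        define c where "c = m s t s y w"
        have cC: "c \<in> C s s" unfolding c_def using yC wC by simp
        have pz: "gm_mult m p z = sg s s c" unfolding p_def z_def c_def by (rule sg_sg[OF R yC wC])
        have pzp: "gm_mult m (gm_mult m p z) p = p"
          unfolding pz unfolding p_def sg_sg[OF R cC yC] unfolding c_def using yw by simp
        have qt: "\<And>i. q i t = 0" unfolding q_def p_def y_def sg_def using row by auto
        have qz: "gm_mult m q z = 0"
          unfolding z_def sg_mult_right[OF R wC qc] using qt wC by (simp add: fun_eq_iff)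
        define u where "u = q - gm_mult m (gm_mult m p z) q"
        have uJ: "u \<in> J" unfolding u_def using Jd[OF qJ Jm[OF N.mul_in[OF pc zc] qJ]] .
        have pzq: "gm_mult m (gm_mult m p z) q = (\<lambda>i j. if i = s then m s s j c (q s j) else 0)"
          unfolding pz by (rule sg_mult_left[OF R cC qc])
        have qrow: "\<And>i j. i \<noteq> s \<Longrightarrow> q i j = 0" unfolding q_def p_def sg_def using row by auto
        have urow: "\<forall>i j. u i j \<noteq> 0 \<longrightarrow> i = s" unfolding u_def pzq using qrow by auto
        have ucol: "snd ` supp u \<subseteq> snd ` supp x - {t}"
        proof
          fix j assume "j \<in> snd ` supp u"
          then obtain i where uij: "u i j \<noteq> 0" unfolding supp_def by auto
          then have iss: "i = s" using urow by auto
          have qsj: "q s j \<noteq> 0"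
          proof
            assume "q s j = 0"
            then have "u s j = 0" unfolding u_def pzq using cC by simp
            then show False using uij iss by simp
          qed
          then have "j \<noteq> t" using qt by auto
          moreover have "x s j \<noteq> 0" using qsj \<open>j \<noteq> t\<close> unfolding q_def p_def sg_def by auto
          ultimately show "j \<in> snd ` supp x - {t}" unfolding supp_def by (auto intro: image_eqI[where x="(s, j)"])
        qed
        have fx: "finite (snd ` supp x)" using carrierD(1)[OF R xc] by simp
        have tin: "t \<in> snd ` supp x" using st unfolding supp_def by (auto intro: image_eqI[where x="(s, t)"])
        have "card (snd ` supp u) < n"
        proof -
          have "card (snd ` supp u) \<le> card (snd ` supp x - {t})" using ucol fx by (simp add: card_mono)
          also have "\<dots> < card (snd ` supp x)" using fx tin by (rule card_Diff1_less)
          finally show ?thesis using cn by simp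
        qed
        then have "N.reg u" using less uJ urow by blast
        then show "N.reg x" using N.split2[OF xpq pc qc zc pzp qz] unfolding u_def by blast
      qed
    qed
  qed
  have outer: "\<forall>x. x \<in> J \<longrightarrow> card (fst ` supp x) = n \<longrightarrow> N.reg x" for n
  proof (induction n rule: less_induct)
    case (less n)
    show ?case
    proof (intro allI impI)
      fix x assume x: "x \<in> J" and cn: "card (fst ` supp x) = n"
      have xc: "x \<in> gm_carrier C" using Jsub x .
      show "N.reg x"
      proof (cases "supp x = {}")
        case True then have "x = 0" by (rule z0)
        then show ?thesis using reg0 by simp
      next
        case False
        then obtain s t where st: "x s t \<noteq> 0" unfolding supp_def by auto
        define r where "r = (\<lambda>i j. if i = s then x i j else 0)"
        define q where "q = x - r"
        have rJ: "r \<in> J"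
        proof (rule mk)
          have "supp r \<subseteq> supp x" unfolding r_def supp_def by auto
          then show "finite (supp r)" using carrierD(1)[OF R xc] finite_subset by blast
          fix i j show "r i j \<in> Q i j" unfolding r_def using ent[OF x] Q0 by auto
        qed
        have rc: "r \<in> gm_carrier C" using Jsub[OF rJ] .
        have qJ: "q \<in> J" unfolding q_def using Jd[OF x rJ] .
        have qc: "q \<in> gm_carrier C" using Jsub[OF qJ] .
        have xrq: "x = r + q" unfolding q_def by simp
        have "N.reg r" using inner[of s "card (snd ` supp r)"] rJ unfolding r_def by auto
        then obtain z where zc: "z \<in> gm_carrier C" and rz: "r = gm_mult m (gm_mult m r z) r"
          unfolding N.reg_def by blast
        define z' where "z' = (\<lambda>i j. if j = s then z i j else 0)"
        have z'c: "z' \<in> gm_carrier C"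
        proof (rule carrierI[OF R])
          have "supp z' \<subseteq> supp z" unfolding z'_def supp_def by auto
          then show "finite (supp z')" using carrierD(1)[OF R zc] finite_subset by blast
          fix i j show "z' i j \<in> C i j" unfolding z'_def using carrierD(2)[OF R zc] by simp
        qed
        have rrow: "\<And>k j. k \<noteq> s \<Longrightarrow> r k j = 0" unfolding r_def by simp
        have zr: "gm_mult m z' r = gm_mult m z r"
        proof (intro ext)
          fix i j
          have "gm_mult m z' r i j = m i s j (z' i s) (r s j)" by (rule mult_rowright[OF R z'c rc rrow])
          moreover have "gm_mult m z r i j = m i s j (z i s) (r s j)" by (rule mult_rowright[OF R zc rc rrow])
          ultimately show "gm_mult m z' r i j = gm_mult m z r i j" unfolding z'_def by simp
        qed
        have rzr: "gm_mult m (gm_mult m r z') r = r"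
          using rz zr N.assoc[OF rc z'c rc] N.assoc[OF rc zc rc] by simp
        have z'q: "gm_mult m z' q = 0"
        proof (intro ext)
          fix i j
          have "\<And>k. k \<noteq> s \<Longrightarrow> z' i k = 0" unfolding z'_def by simp
          then have "gm_mult m z' q i j = m i s j (z' i s) (q s j)" by (rule mult_rowleft[OF R z'c qc])
          also have "\<dots> = 0" unfolding q_def r_def using carrierD(2)[OF R z'c] by simp
          finally show "gm_mult m z' q i j = 0 i j" by simp
        qed
        define u where "u = q - gm_mult m (gm_mult m q z') r"
        have uJ: "u \<in> J"
        proof -
          have "gm_mult m (gm_mult m q z') r \<in> J"
            using Jm[OF N.mul_in[OF qc z'c] rJ] .
          then show ?thesis unfolding u_def using Jd[OF qJ] by blast
        qed
        have qrow: "\<And>i j. q i j \<noteq> 0 \<Longrightarrow> i \<noteq> s \<and> x i j \<noteq> 0" unfolding q_def r_def by (auto split: if_splits)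
        have urow: "fst ` supp u \<subseteq> fst ` supp x - {s}"
        proof
          fix i assume "i \<in> fst ` supp u"
          then obtain j where uij: "u i j \<noteq> 0" unfolding supp_def by auto
          have "\<exists>k. q i k \<noteq> 0"
          proof (cases "q i j = 0")
            case False then show ?thesis by blast
          next
            case True
            then have "gm_mult m (gm_mult m q z') r i j \<noteq> 0" using uij unfolding u_def by simp
            then obtain k where "gm_mult m q z' i k \<noteq> 0"
              using gm_mult_nz[OF R, of "gm_mult m q z'" i r j] carrierD(2)[OF R N.mul_in[OF qc z'c]] by blast
            then obtain k' where "q i k' \<noteq> 0"
              using gm_mult_nz[OF R, of q i z' k] carrierD(2)[OF R qc] by blast
            then show ?thesis by blast
          qed
          then obtain k where "q i k \<noteq> 0" by blast
          then have "i \<noteq> s" "x i k \<noteq> 0" using qrow by auto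
          then show "i \<in> fst ` supp x - {s}" unfolding supp_def by (auto intro: image_eqI[where x="(i, k)"])
        qed
        have fx: "finite (fst ` supp x)" using carrierD(1)[OF R xc] by simp
        have sin: "s \<in> fst ` supp x" using st unfolding supp_def by (auto intro: image_eqI[where x="(s, t)"])
        have "card (fst ` supp u) < n"
        proof -
          have "card (fst ` supp u) \<le> card (fst ` supp x - {s})" using urow fx by (simp add: card_mono)
          also have "\<dots> < card (fst ` supp x)" using fx sin by (rule card_Diff1_less)
          finally show ?thesis using cn by simp
        qed
        then have "N.reg u" using less uJ by blast
        then show "N.reg x" using N.split1[OF xrq rc qc z'c rzr z'q] unfolding u_def by blast
      qed
    qed
  qed
  show ?thesis using outer xJ unfolding J_def reg_eq[OF R] by blast
qed

end



context
  fixes C :: "'i \<Rightarrow> 'i \<Rightarrow> 'a::ab_group_add set" and m :: "'i \<Rightarrow> 'i \<Rightarrow> 'i \<Rightarrow> 'a \<Rightarrow> 'a \<Rightarrow> 'a"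
  assumes R: "gm_ring C m"
begin

lemmas RC3[simp] = C0[OF R] Cdiff[OF R] Cneg[OF R] Cadd[OF R] mC[OF R] m0l[OF R] m0r[OF R]

interpretation N: nur "gm_carrier C" "gm_mult m" by (rule nur_gm[OF R])

lemma sg_in_rn:
  assumes ND: "has_gm_nonzero_divisors C m" and b: "b \<in> rn_gamma C m k j"
  shows "sg k j b \<in> rn_ring C m"
proof -
  note A = massoc[OF R]
  obtain Bg where GI: "gamma_ideal C m k j Bg" and GR: "\<forall>x\<in>Bg. gamma_regular C m k j x" and bB: "b \<in> Bg"
    using b unfolding rn_gamma_def by blast
  have Bsub: "Bg \<subseteq> C k j" and B0: "0 \<in> Bg" and Bd: "\<And>x y. x \<in> Bg \<Longrightarrow> y \<in> Bg \<Longrightarrow> x - y \<in> Bg"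
    and Bl: "\<And>a g x. a \<in> C k j \<Longrightarrow> g \<in> C j k \<Longrightarrow> x \<in> Bg \<Longrightarrow> m k k j (m k j k a g) x \<in> Bg"
    and Br: "\<And>a g x. a \<in> C k j \<Longrightarrow> g \<in> C j k \<Longrightarrow> x \<in> Bg \<Longrightarrow> m k k j (m k j k x g) a \<in> Bg"
    using GI unfolding gamma_ideal_def by blast+
  have ub: "m k k j u x \<in> Bg" if u: "u \<in> C k k" and x: "x \<in> Bg" for u x
  proof -
    have xC: "x \<in> C k j" using x Bsub by blast
    obtain g where g: "g \<in> C j k" and xg: "x = m k k j (m k j k x g) x" using GR x unfolding gamma_regular_def by blast
    have "m k k j u x = m k k j u (m k k j (m k j k x g) x)" using arg_cong[OF xg, of "m k k j u"] .
    also have "\<dots> = m k k j (m k j k (m k k j u x) g) x" using u xC g by (simp add: A)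
    finally show ?thesis using Bl[of "m k k j u x" g x] u xC g x by simp
  qed
  have bv: "m k j j x v \<in> Bg" if v: "v \<in> C j j" and x: "x \<in> Bg" for v x
  proof -
    have xC: "x \<in> C k j" using x Bsub by blast
    obtain g where g: "g \<in> C j k" and xg: "x = m k k j (m k j k x g) x" using GR x unfolding gamma_regular_def by blast
    have "m k j j x v = m k j j (m k k j (m k j k x g) x) v" using arg_cong[OF xg, of "\<lambda>x. m k j j x v"] .
    also have "\<dots> = m k k j (m k j k x g) (m k j j x v)" using v xC g by (simp add: A)
    finally show ?thesis using Br[of "m k j j x v" g x] v xC g x by simp
  qed
  define Q where "Q s t = {y \<in> C s t. \<forall>u\<in>C k s. \<forall>v\<in>C t j. m k t j (m k s t u y) v \<in> Bg}" for s t
  have QC: "\<And>s t. Q s t \<subseteq> C s t" unfolding Q_def by blast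
  have Q0: "\<And>s t. 0 \<in> Q s t" unfolding Q_def using B0 by simp
  have Qd: "\<And>s t x y. x \<in> Q s t \<Longrightarrow> y \<in> Q s t \<Longrightarrow> x - y \<in> Q s t"
  proof -
    fix s t x y assume x: "x \<in> Q s t" and y: "y \<in> Q s t"
    have xC: "x \<in> C s t" and yC: "y \<in> C s t" using x y QC by blast+
    show "x - y \<in> Q s t" unfolding Q_def
    proof (intro CollectI conjI ballI)
      show "x - y \<in> C s t" using xC yC by simp
      fix u v assume u: "u \<in> C k s" and v: "v \<in> C t j"
      have "m k t j (m k s t u (x - y)) v = m k t j (m k s t u x) v - m k t j (m k s t u y) v"
        using u v xC yC by (simp add: mdiffl[OF R] mdiffr[OF R])
      moreover have "m k t j (m k s t u x) v \<in> Bg" "m k t j (m k s t u y) v \<in> Bg"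
        using x y u v unfolding Q_def by blast+
      ultimately show "m k t j (m k s t u (x - y)) v \<in> Bg" using Bd by simp
    qed
  qed
  have Ql: "\<And>r s t a y. a \<in> C r s \<Longrightarrow> y \<in> Q s t \<Longrightarrow> m r s t a y \<in> Q r t"
  proof -
    fix r s t a y assume a: "a \<in> C r s" and y: "y \<in> Q s t"
    have yC: "y \<in> C s t" using y QC by blast
    show "m r s t a y \<in> Q r t" unfolding Q_def
    proof (intro CollectI conjI ballI)
      show "m r s t a y \<in> C r t" using a yC by simp
      fix u v assume u: "u \<in> C k r" and v: "v \<in> C t j"
      have "m k t j (m k r t u (m r s t a y)) v = m k t j (m k s t (m k r s u a) y) v"
        using u v a yC by (simp add: A)
      moreover have "m k t j (m k s t (m k r s u a) y) v \<in> Bg" using y u a v unfolding Q_def by simp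
      ultimately show "m k t j (m k r t u (m r s t a y)) v \<in> Bg" by simp
    qed
  qed
  have Qr: "\<And>r s t a y. y \<in> Q r s \<Longrightarrow> a \<in> C s t \<Longrightarrow> m r s t y a \<in> Q r t"
  proof -
    fix r s t a y assume y: "y \<in> Q r s" and a: "a \<in> C s t"
    have yC: "y \<in> C r s" using y QC by blast
    show "m r s t y a \<in> Q r t" unfolding Q_def
    proof (intro CollectI conjI ballI)
      show "m r s t y a \<in> C r t" using a yC by simp
      fix u v assume u: "u \<in> C k r" and v: "v \<in> C t j"
      have "m k t j (m k r t u (m r s t y a)) v = m k s j (m k r s u y) (m s t j a v)"
        using u v a yC by (simp add: A)
      moreover have "m k s j (m k r s u y) (m s t j a v) \<in> Bg" using y u a v unfolding Q_def by simp
      ultimately show "m k t j (m k r t u (m r s t y a)) v \<in> Bg" by simp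
    qed
  qed
  have QR: "\<And>s t y. y \<in> Q s t \<Longrightarrow> gamma_regular C m s t y"
  proof -
    fix s t y assume y: "y \<in> Q s t"
    have yC: "y \<in> C s t" using y QC by blast
    obtain d where d: "d \<in> C k s" "\<forall>j. \<forall>y\<in>C s j. y \<noteq> 0 \<longrightarrow> m k s j d y \<noteq> 0"
      using ND[unfolded has_gm_nonzero_divisors_def, rule_format, of k s] by blast
    obtain d' where d': "d' \<in> C t j" "\<forall>i. \<forall>x\<in>C i t. x \<noteq> 0 \<longrightarrow> m i t j x d' \<noteq> 0"
      using ND[unfolded has_gm_nonzero_divisors_def, rule_format, of t j] by blast
    define c where "c = m k t j (m k s t d y) d'"
    have yQ: "\<forall>u\<in>C k s. \<forall>v\<in>C t j. m k t j (m k s t u y) v \<in> Bg" using y unfolding Q_def by simp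
    have "c \<in> Bg" unfolding c_def using yQ d(1) d'(1) by simp
    then have "gamma_regular C m k j c" using GR by blast
    then obtain g where g: "g \<in> C j k" and cc0: "c = m k k j (m k j k c g) c"
      unfolding gamma_regular_def by blast
    note cc = cc0[unfolded c_def]
    note GRC = gamma_reg_cancel[OF R d(1) d(2) d'(1) d'(2) yC g]
    show "gamma_regular C m s t y" using GRC[OF cc] .
  qed
  have I: "gm_ideal_of C m (gm_sum Q)" by (rule gm_sum_ideal[OF R QC Q0 Qd Ql Qr])
  have reg: "\<forall>x\<in>gm_sum Q. gm_regular C m x" using gm_sum_regular[OF R QC I QR] by blast
  have bQ: "b \<in> Q k j"
    unfolding Q_def
  proof (intro CollectI conjI ballI)
    show "b \<in> C k j" using bB Bsub by blast
    fix u v assume u: "u \<in> C k k" and v: "v \<in> C j j"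
    show "m k j j (m k k j u b) v \<in> Bg" using bv[OF v ub[OF u bB]] .
  qed
  have "sg k j b \<in> gm_sum Q"
  proof -
    have "{(i, j'). sg k j b i j' \<noteq> 0} \<subseteq> {(k, j)}" unfolding sg_def by auto
    then have "finite {(i, j'). sg k j b i j' \<noteq> 0}" using finite_subset by blast
    moreover have "\<forall>i j'. sg k j b i j' \<in> Q i j'" unfolding sg_def using bQ Q0 by auto
    ultimately show ?thesis unfolding gm_sum_def by blast
  qed
  then show ?thesis unfolding rn_ring_def using I reg by blast
qed

lemma rn_basic:
  shows "rn_ring C m \<subseteq> gm_carrier C" and "\<forall>x\<in>rn_ring C m. gm_regular C m x"
    and "0 \<in> rn_ring C m"
    and "\<And>x y. x \<in> rn_ring C m \<Longrightarrow> y \<in> rn_ring C m \<Longrightarrow> x + y \<in> rn_ring C m"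
    and "\<And>x. x \<in> rn_ring C m \<Longrightarrow> - x \<in> rn_ring C m"
    and "\<And>a x. a \<in> gm_carrier C \<Longrightarrow> x \<in> rn_ring C m \<Longrightarrow> gm_mult m a x \<in> rn_ring C m \<and> gm_mult m x a \<in> rn_ring C m"
proof -
  have mem: "x \<in> rn_ring C m \<longleftrightarrow> (\<exists>B. N.idl B \<and> (\<forall>x\<in>B. N.reg x) \<and> x \<in> B)" for x
    unfolding rn_ring_def idl_eq[OF R] reg_eq[OF R] by blast
  show "rn_ring C m \<subseteq> gm_carrier C" using mem unfolding N.idl_def by blast
  show "\<forall>x\<in>rn_ring C m. gm_regular C m x" using mem unfolding reg_eq[OF R] by blast
  have "N.idl {0}" unfolding N.idl_def using N.zero_in N.mul0l N.mul0r by auto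
  moreover have "N.reg 0" unfolding N.reg_def using N.zero_in N.mul0l[OF N.zero_in] by metis
  ultimately show "0 \<in> rn_ring C m" using mem by blast
  show "\<And>x y. x \<in> rn_ring C m \<Longrightarrow> y \<in> rn_ring C m \<Longrightarrow> x + y \<in> rn_ring C m"
  proof -
    fix x y assume "x \<in> rn_ring C m" "y \<in> rn_ring C m"
    then obtain I J where I: "N.idl I" "\<forall>x\<in>I. N.reg x" "x \<in> I" and J: "N.idl J" "\<forall>x\<in>J. N.reg x" "y \<in> J"
      using mem by blast
    have "x + y \<in> {a + b |a b. a \<in> I \<and> b \<in> J}" using I J by blast
    then show "x + y \<in> rn_ring C m" using N.idl_sum[OF I(1,2) J(1,2)] mem by blast
  qed
  show "\<And>x. x \<in> rn_ring C m \<Longrightarrow> - x \<in> rn_ring C m"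
  proof -
    fix x assume "x \<in> rn_ring C m"
    then obtain I where I: "N.idl I" "\<forall>x\<in>I. N.reg x" "x \<in> I" using mem by blast
    then have "0 - x \<in> I" unfolding N.idl_def by blast
    then show "- x \<in> rn_ring C m" using I mem by auto
  qed
  show "\<And>a x. a \<in> gm_carrier C \<Longrightarrow> x \<in> rn_ring C m \<Longrightarrow> gm_mult m a x \<in> rn_ring C m \<and> gm_mult m x a \<in> rn_ring C m"
  proof -
    fix a x assume a: "a \<in> gm_carrier C" and "x \<in> rn_ring C m"
    then obtain I where I: "N.idl I" "\<forall>x\<in>I. N.reg x" "x \<in> I" using mem by blast
    then have "gm_mult m a x \<in> I" "gm_mult m x a \<in> I" using a unfolding N.idl_def by blast+
    then show "gm_mult m a x \<in> rn_ring C m \<and> gm_mult m x a \<in> rn_ring C m" using I mem by blast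
  qed
qed

lemma rn_ideal: "gm_ideal_of C m (rn_ring C m)"
proof -
  have "N.idl (rn_ring C m)" unfolding N.idl_def
  proof (intro conjI ballI)
    show "rn_ring C m \<subseteq> gm_carrier C" "0 \<in> rn_ring C m" using rn_basic by auto
    fix x y assume "x \<in> rn_ring C m" "y \<in> rn_ring C m"
    then have "x + - y \<in> rn_ring C m" using rn_basic(4,5) by blast
    then show "x - y \<in> rn_ring C m" by simp
  next
    fix a x assume "a \<in> gm_carrier C" "x \<in> rn_ring C m"
    then show "gm_mult m a x \<in> rn_ring C m" "gm_mult m x a \<in> rn_ring C m" using rn_basic(6) by blast+
  qed
  then show ?thesis using idl_eq[OF R] by simp
qed

lemma restr_in_rn:
  assumes "\<And>i j. sg i j (x i j) \<in> rn_ring C m" and "finite P"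
  shows "(\<lambda>i j. if (i, j) \<in> P then x i j else 0) \<in> rn_ring C m"
  using assms(2)
proof (induction P rule: finite_induct)
  case empty
  have "(\<lambda>i j. if (i, j) \<in> {} then x i j else 0) = 0" by (simp add: fun_eq_iff)
  then show ?case using rn_basic(3) by simp
next
  case (insert p P)
  obtain a b where p: "p = (a, b)" by fastforce
  have "(\<lambda>i j. if (i, j) \<in> insert p P then x i j else 0)
      = (\<lambda>i j. if (i, j) \<in> P then x i j else 0) + sg a b (x a b)"
    using insert(2) unfolding p by (auto simp: fun_eq_iff sg_def)
  then show ?case using rn_basic(4)[OF insert(3) assms(1)] by simp
qed

lemma rn_eq:
  assumes ND: "has_gm_nonzero_divisors C m"
  shows "rn_ring C m = gm_sum (\<lambda>i j. rn_gamma C m i j)"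
proof
  show "rn_ring C m \<subseteq> gm_sum (\<lambda>i j. rn_gamma C m i j)"
  proof
    fix x assume "x \<in> rn_ring C m"
    then obtain B where B: "gm_ideal_of C m B" "\<forall>x\<in>B. gm_regular C m x" "x \<in> B"
      unfolding rn_ring_def by blast
    have xc: "x \<in> gm_carrier C" using B unfolding gm_ideal_of_def by blast
    have "\<forall>i j. x i j \<in> rn_gamma C m i j" using comp_in_rn_gamma[OF R B(1,2) ND B(3)] by blast
    moreover have "finite {(i, j). x i j \<noteq> 0}" using xc unfolding gm_carrier_def by blast
    ultimately show "x \<in> gm_sum (\<lambda>i j. rn_gamma C m i j)" unfolding gm_sum_def by blast
  qed
next
  show "gm_sum (\<lambda>i j. rn_gamma C m i j) \<subseteq> rn_ring C m"
  proof
    fix x assume x: "x \<in> gm_sum (\<lambda>i j. rn_gamma C m i j)"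
    have sgs: "\<And>i j. sg i j (x i j) \<in> rn_ring C m"
      using x sg_in_rn[OF ND] unfolding gm_sum_def by blast
    have fin: "finite (supp x)" using x unfolding gm_sum_def supp_def by blast
    have "x = (\<lambda>i j. if (i, j) \<in> supp x then x i j else 0)" by (auto simp: fun_eq_iff supp_def)
    then show "x \<in> rn_ring C m" using restr_in_rn[OF sgs fin] by simp
  qed
qed

end

theorem theorem2p3:
  fixes C :: "'i \<Rightarrow> 'i \<Rightarrow> 'a::ab_group_add set"
    and m :: "'i \<Rightarrow> 'i \<Rightarrow> 'i \<Rightarrow> 'a \<Rightarrow> 'a \<Rightarrow> 'a"
  assumes "gm_ring C m"
    and "has_gm_nonzero_divisors C m"
  shows "rn_ring C m = gm_part C m (rn_ring C m)
       \<and> gm_part C m (rn_ring C m) = gm_sum (\<lambda>i j. rn_gamma C m i j)"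
proof -
  have eq: "rn_ring C m = gm_sum (\<lambda>i j. rn_gamma C m i j)" by (rule rn_eq[OF assms])
  have sub: "\<And>i j. rn_gamma C m i j \<subseteq> C i j" unfolding rn_gamma_def gamma_ideal_def by blast
  have gi: "is_gm_ideal C m (rn_ring C m)"
    unfolding is_gm_ideal_def using rn_ideal[OF assms(1)] eq sub by blast
  have "gm_part C m (rn_ring C m) = rn_ring C m"
    unfolding gm_part_def using gi by blast
  then show ?thesis using eq by simp
qed


end
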